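(* Let $N\ge3$ be odd. For every $s\in(1,2^{(N-1)/2})$ there exists $\theta_s\in\mathcal G$ such that $s=\langle M_N(\theta_s)\rangle$ if $N\equiv3\pmod4$, and $s=\langle\tilde M_N(\theta_s)\rangle$ if $N\equiv1\pmod 4$.
   Context: $\mathcal G=(\pi/4,\pi/2)\cup(\pi/2,3\pi/4)\cup(5\pi/4,3\pi/2)\cup(3\pi/2,7\pi/4)$. For $\bm x\in\{0,1\}^N$ let $|\bm x|=\sum_kx_k$, $c_{\bm x}=\cos\big[\frac\pi2\big(\frac{N-1}2-|\bm x|\big)\big]$. The MABK expression is $\langle M_N\rangle=2^{(1-N)/2}\sum_{\bm x}c_{\bm x}\langle A^{(1)}_{x_1}\cdots A^{(N)}_{x_N}\rangle$, with quantum maximum $2^{(N-1)/2}$. Consider the strategy with state $(|0\rangle^{\otimes N}+i|1\rangle^{\otimes N})/\sqrt2$ and $A^{(k)}_0=\sigma_X$, $A^{(k)}_1=\cos\theta\sigma_X+\sin\theta\sigma_Y$ for all $k$; its full correlator at input $\bm x$ is $\sin(|\bm x|\theta)$. Define $\langle M_N(\theta)\rangle:=2^{(1-N)/2}\sum_{\bm x}c_{\bm x}\sin(|\bm x|\theta)$ (its MABK value), and $\langle\tilde M_N(\theta)\rangle$ as the value on this strategy of the relabelled MABK expression obtained by substituting $A^{(k)}_0\mapsto A^{(k)}_1$, $A^{(k)}_1\mapsto -A^{(k)}_0$ for every party, i.e. $\langle\tilde M_N(\theta)\rangle=2^{(1-N)/2}\sum_{\bm x}c_{\bm x}(-1)^{|\bm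 x|}\sin((N-|\bm x|)\theta)$. *)

theory Defs
  imports "HOL-Analysis.Analysis" "HOL-Library.FuncSet"
begin

definition bitstrings :: "nat \<Rightarrow> (nat \<Rightarrow> nat) set" where
  "bitstrings N = PiE {0..<N} (\<lambda>_. {0, 1})"

definition weight :: "nat \<Rightarrow> (nat \<Rightarrow> nat) \<Rightarrow> nat" where
  "weight N x = (\<Sum>k<N. x k)"

definition mabk_coeff :: "nat \<Rightarrow> (nat \<Rightarrow> nat) \<Rightarrow> real" where
  "mabk_coeff N x = cos (pi / 2 * ((real N - 1) / 2 - real (weight N x)))"

definition M_val :: "nat \<Rightarrow> real \<Rightarrow> real" where
  "M_val N \<theta> = 2 powr ((1 - real N) / 2) *
     (\<Sum>x\<in>bitstrings N. mabk_coeff N x * sin (real (weight N x) * \<theta>))"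

definition Mtilde_val :: "nat \<Rightarrow> real \<Rightarrow> real" where
  "Mtilde_val N \<theta> = 2 powr ((1 - real N) / 2) *
     (\<Sum>x\<in>bitstrings N. mabk_coeff N x * (-1) ^ weight N x
        * sin ((real N - real (weight N x)) * \<theta>))"

definition G_set :: "real set" where
  "G_set = {pi/4<..<pi/2} \<union> {pi/2<..<3*pi/4} \<union> {5*pi/4<..<3*pi/2} \<union> {3*pi/2<..<7*pi/4}"

end

theory Submission
  imports Defs
begin

lemma cis_sum_lemma: "finite A \<Longrightarrow> cis (\<Sum>k\<in>A. f k) = (\<Prod>k\<in>A. cis (f k))"
  by (induction A rule: finite_induct) (auto simp: cis_mult[symmetric])

lemma one_plus_cis: "1 + cis \<phi> = cis (\<phi>/2) * complex_of_real (2 * cos (\<phi>/2))"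
proof -
  have c: "cos \<phi> = 2 * (cos (\<phi>/2))^2 - 1" using cos_double[of "\<phi>/2"] by (simp add: cos_squared_eq)
  have s: "sin \<phi> = 2 * sin (\<phi>/2) * cos (\<phi>/2)" using sin_double[of "\<phi>/2"] by simp
  show ?thesis by (simp add: complex_eq_iff c s power2_eq_square)
qed

lemma cis_bitsum: "(\<Sum>x\<in>bitstrings N. cis (real (weight N x) * \<phi>)) = (1 + cis \<phi>)^N"
proof -
  have "(\<Sum>x\<in>bitstrings N. cis (real (weight N x) * \<phi>))
      = (\<Sum>x\<in>bitstrings N. \<Prod>k\<in>{0..<N}. cis (real (x k) * \<phi>))"
    unfolding weight_def
    by (intro sum.cong refl) (simp add: of_nat_sum sum_distrib_right cis_sum_lemma lessThan_atLeast0)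
  also have "\<dots> = (\<Prod>k\<in>{0..<N}. \<Sum>v\<in>{0,1::nat}. cis (real v * \<phi>))"
    unfolding bitstrings_def by (rule prod_sum_PiE[symmetric]) auto
  also have "\<dots> = (1 + cis \<phi>)^N" by simp
  finally show ?thesis .
qed

lemma sin_bitsum: "(\<Sum>x\<in>bitstrings N. sin (real (weight N x) * \<phi> + b)) = (2 * cos (\<phi>/2))^N * sin (real N * \<phi> / 2 + b)"
proof -
  have "(\<Sum>x\<in>bitstrings N. sin (real (weight N x) * \<phi> + b)) = Im (cis b * (\<Sum>x\<in>bitstrings N. cis (real (weight N x) * \<phi>)))"
    by (simp add: sum_distrib_left cis_mult add.commute)
  also have "\<dots> = Im (cis b * (cis (\<phi>/2) * complex_of_real (2 * cos (\<phi>/2)))^N)"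
    by (simp add: cis_bitsum one_plus_cis)
  also have "\<dots> = Im (cis (b + real N * \<phi> / 2) * complex_of_real ((2 * cos (\<phi>/2))^N))"
  proof -
    have "(cis (\<phi>/2) * complex_of_real (2 * cos (\<phi>/2)))^N = cis (real N * \<phi> / 2) * complex_of_real ((2 * cos (\<phi>/2))^N)"
    proof -
      have "cis (\<phi>/2) ^ N = cis (real N * \<phi> / 2)" unfolding Complex.DeMoivre by simp
      then show ?thesis by (simp only: power_mult_distrib of_real_power[symmetric])
    qed
    then show ?thesis by (simp only: mult.assoc[symmetric] cis_mult)
  qed
  also have "\<dots> = (2 * cos (\<phi>/2))^N * sin (real N * \<phi> / 2 + b)"
    by (simp add: add.commute)
  finally show ?thesis .
qed

lemma sin_bitsum_minus: "(\<Sum>x\<in>bitstrings N. sin (real (weight N x) * \<phi> - b)) = (2 * cos (\<phi>/2))^N * sin (real N * \<phi> / 2 - b)"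
  using sin_bitsum[of N \<phi> "-b"] by simp

lemma powr_const: "2 powr ((1 - real N)/2) * ((2::real)^N / 2) = 2 powr ((real N - 1)/2)"
proof -
  have "(2::real)^N / 2 = 2 powr (real N - 1)" by (simp add: powr_diff powr_realpow)
  hence "2 powr ((1 - real N)/2) * ((2::real)^N / 2) = 2 powr ((1 - real N)/2 + (real N - 1))" by (simp add: powr_add)
  also have "(1 - real N)/2 + (real N - 1) = (real N - 1)/2" by (simp add: field_simps)
  finally show ?thesis .
qed

lemma prod_to_sum: "cos (v::real) * sin u = (sin (u + v) + sin (u - v))/2"
  by (simp add: sin_add sin_diff)

lemma combine:
  "2 powr ((1 - real N)/2) * (((2 * c1)^N * S1 + (2 * c2)^N * S2)/2)
   = 2 powr ((real N - 1)/2) * (c1^N * S1 + c2^N * S2)"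
proof -
  have "2 powr ((1 - real N)/2) * (((2 * c1)^N * S1 + (2 * c2)^N * S2)/2)
     = (2 powr ((1 - real N)/2) * ((2::real)^N / 2)) * (c1^N * S1 + c2^N * S2)"
    by (simp add: power_mult_distrib algebra_simps)
  then show ?thesis by (simp only: powr_const)
qed

lemma M_closed:
  "M_val N \<theta> = 2 powr ((real N - 1)/2) * (cos ((\<theta> - pi/2)/2)^N * sin (real N*(\<theta> - pi/2)/2 + pi*(real N - 1)/4)
      + cos ((\<theta> + pi/2)/2)^N * sin (real N*(\<theta> + pi/2)/2 + - (pi*(real N - 1)/4)))"
proof -
  define a where "a = pi*(real N - 1)/4"
  have eq: "mabk_coeff N x * sin (real (weight N x) * \<theta>) = (sin (real (weight N x) * (\<theta> - pi/2) + a) + sin (real (weight N x) * (\<theta> + pi/2) + (- a)))/2" for x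
  proof -
    define w where "w = real (weight N x)"
    have "mabk_coeff N x = cos (a - w * pi/2)" unfolding mabk_coeff_def a_def w_def
      by (rule arg_cong[where f=cos]) (simp add: algebra_simps)
    moreover have e1: "w * \<theta> + (a - w * pi/2) = w * (\<theta> - pi/2) + a" by (simp add: algebra_simps)
    moreover have e2: "w * \<theta> - (a - w * pi/2) = w * (\<theta> + pi/2) + (- a)" by (simp add: algebra_simps)
    ultimately show ?thesis unfolding w_def[symmetric] by (simp only: prod_to_sum e1 e2)
  qed
  have "M_val N \<theta> = 2 powr ((1 - real N)/2) * (((2 * cos ((\<theta> - pi/2)/2))^N * sin (real N*(\<theta> - pi/2)/2 + a)
      + (2 * cos ((\<theta> + pi/2)/2))^N * sin (real N*(\<theta> + pi/2)/2 + - a))/2)"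
    unfolding M_val_def eq by (simp add: sum.distrib sum_divide_distrib[symmetric] sin_bitsum sin_bitsum_minus)
  also have "\<dots> = 2 powr ((real N - 1)/2) * (cos ((\<theta> - pi/2)/2)^N * sin (real N*(\<theta> - pi/2)/2 + a)
      + cos ((\<theta> + pi/2)/2)^N * sin (real N*(\<theta> + pi/2)/2 + - a))" by (rule combine)
  finally show ?thesis unfolding a_def .
qed

lemma Mt_closed:
  "Mtilde_val N \<theta> = 2 powr ((real N - 1)/2) * (cos (((pi - \<theta>) - pi/2)/2)^N * sin (real N*((pi - \<theta>) - pi/2)/2 + (real N * \<theta> + pi*(real N - 1)/4))
      + cos (((pi - \<theta>) + pi/2)/2)^N * sin (real N*((pi - \<theta>) + pi/2)/2 + (real N * \<theta> - pi*(real N - 1)/4)))"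
proof -
  define a where "a = pi*(real N - 1)/4"
  define \<psi> where "\<psi> = pi - \<theta>"
  have eq: "mabk_coeff N x * (-1) ^ weight N x * sin ((real N - real (weight N x)) * \<theta>) = (sin (real (weight N x) * (\<psi> - pi/2) + (real N * \<theta> + a)) + sin (real (weight N x) * (\<psi> + pi/2) + (real N * \<theta> - a)))/2" for x
  proof -
    define w where "w = real (weight N x)"
    have c: "mabk_coeff N x = cos (a - w * pi/2)" unfolding mabk_coeff_def a_def w_def
      by (rule arg_cong[where f=cos]) (simp add: algebra_simps)
    have sg: "(-1) ^ weight N x * sin ((real N - w) * \<theta>) = sin (w * \<psi> + real N * \<theta>)"
    proof -
      have "w * \<psi> + real N * \<theta> = (real N - w) * \<theta> + real (weight N x) * pi" unfolding \<psi>_def w_def by (simp add: algebra_simps)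
      then show ?thesis by (simp add: sin_add)
    qed
    have e1: "w * \<psi> + real N * \<theta> + (a - w * pi/2) = w * (\<psi> - pi/2) + (real N * \<theta> + a)" by (simp add: algebra_simps)
    have e2: "w * \<psi> + real N * \<theta> - (a - w * pi/2) = w * (\<psi> + pi/2) + (real N * \<theta> - a)" by (simp add: algebra_simps)
    show ?thesis unfolding w_def[symmetric] mult.assoc sg c by (simp only: prod_to_sum e1 e2)
  qed
  have "Mtilde_val N \<theta> = 2 powr ((1 - real N)/2) * (((2 * cos ((\<psi> - pi/2)/2))^N * sin (real N*(\<psi> - pi/2)/2 + (real N * \<theta> + a))
      + (2 * cos ((\<psi> + pi/2)/2))^N * sin (real N*(\<psi> + pi/2)/2 + (real N * \<theta> - a)))/2)"
    unfolding Mtilde_val_def eq by (simp add: sum.distrib sum_divide_distrib[symmetric] sin_bitsum sin_bitsum_minus)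
  also have "\<dots> = 2 powr ((real N - 1)/2) * (cos ((\<psi> - pi/2)/2)^N * sin (real N*(\<psi> - pi/2)/2 + (real N * \<theta> + a))
      + cos ((\<psi> + pi/2)/2)^N * sin (real N*(\<psi> + pi/2)/2 + (real N * \<theta> - a)))" by (rule combine)
  finally show ?thesis unfolding a_def \<psi>_def .
qed


lemma bound_term: "\<bar>(d::real)^N * S\<bar> \<le> \<bar>d\<bar>^N" if "\<bar>S\<bar> \<le> 1"
proof -
  have "\<bar>d^N * S\<bar> = \<bar>d\<bar>^N * \<bar>S\<bar>" by (simp add: abs_mult power_abs)
  also have "\<dots> \<le> \<bar>d\<bar>^N * 1" by (rule mult_left_mono) (use that in auto)
  finally show ?thesis by simp
qed

lemma ivt_main:
  fixes f :: "real \<Rightarrow> real" and N :: nat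
  assumes cont: "continuous_on UNIV f"
    and sg: "\<sigma> = 1 \<or> \<sigma> = -1"
    and h1: "\<And>y. \<exists>R. f (pi/2 + y) = K * (\<sigma> * cos (y/2)^N * cos (real N * y/2) + R) \<and> \<bar>R\<bar> \<le> \<bar>sin (y/2)\<bar>^N"
    and h2: "\<And>y. \<exists>R. f (3*pi/2 + y) = K * (- \<sigma> * cos (y/2)^N * cos (real N * y/2) + R) \<and> \<bar>R\<bar> \<le> \<bar>sin (y/2)\<bar>^N"
    and N: "odd N" "N \<ge> 3" and K: "K = 2 powr ((real N - 1)/2)"
    and s: "1 < s" "s < K"
  shows "\<exists>\<theta>\<in>G_set. s = f \<theta>"
proof -
  have Kpos: "K > 0" using K by simp
  have N0: "N \<noteq> 0" using N by auto
  have f1: "f (pi/2) = \<sigma> * K"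
  proof -
    obtain R where "f (pi/2 + 0) = K * (\<sigma> * cos (0/2)^N * cos (real N * 0/2) + R)" "\<bar>R\<bar> \<le> \<bar>sin (0/2)\<bar>^N"
      using h1 by blast
    then show ?thesis using N0 by (simp add: power_0_left)
  qed
  have f2: "f (3*pi/2) = - \<sigma> * K"
  proof -
    obtain R where "f (3*pi/2 + 0) = K * (- \<sigma> * cos (0/2)^N * cos (real N * 0/2) + R)" "\<bar>R\<bar> \<le> \<bar>sin (0/2)\<bar>^N"
      using h2 by blast
    then show ?thesis using N0 by (simp add: power_0_left)
  qed
  obtain x where x: "0 < x" "x \<le> pi/4" and B: "K * (cos (x/2)^N * cos (real N * x/2) + \<bar>sin (x/2)\<bar>^N) \<le> 1"
  proof (cases "N = 3")
    case True
    define t where "t = sin (pi/8)"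
    have t0: "0 \<le> t" unfolding t_def by (rule sin_ge_zero) auto
    have t1: "t \<le> pi/8" unfolding t_def by (rule sin_x_le_x) simp
    have t2: "t \<le> 0.4" using t1 pi_approx by simp
    have c3: "cos (3*pi/8) = t" unfolding t_def
    proof -
      have e: "pi/2 - 3*pi/8 = pi/8" by simp
      show "cos (3*pi/8) = sin (pi/8)" using cos_sin_eq[of "3*pi/8"] e by simp
    qed
    have cb: "cos (pi/8)^3 \<le> 1"
    proof -
      have "\<bar>cos (pi/8)\<bar>^3 \<le> 1^3" by (rule power_mono) auto
      then show ?thesis by (metis abs_ge_self order.trans power_abs one_power2 power_one)
    qed
    have K2: "K = 2" using K True by simp
    have "K * (cos (pi/4/2)^N * cos (real N * (pi/4)/2) + \<bar>sin (pi/4/2)\<bar>^N) = 2 * (cos (pi/8)^3 * t + t^3)"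
      using True K2 c3 t0 unfolding t_def by (simp add: mult.commute)
    also have "\<dots> \<le> 2 * (1 * t + t^3)" using mult_right_mono[OF cb t0] by simp
    also have "\<dots> \<le> 1"
    proof -
      have "t^3 \<le> 0.4^3" by (rule power_mono) (use t0 t2 in auto)
      moreover have "(0.4::real)^3 = 0.064" by (simp add: power3_eq_cube)
      ultimately have "t^3 \<le> 0.064" by simp
      then show ?thesis using t2 by simp
    qed
    finally show ?thesis using that[of "pi/4"] by simp
  next
    case False
    then have N5: "N \<ge> 5" using N by presburger
    define x where "x = pi / real N"
    have xpos: "0 < x" unfolding x_def using N0 by simp
    have x4: "x \<le> pi/4" unfolding x_def using N5 by (simp add: field_simps)
    have cz: "cos (real N * x/2) = 0" unfolding x_def using N0 by simp
    have sb: "\<bar>sin (x/2)\<bar> \<le> 1/2"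
    proof -
      have "0 \<le> sin (x/2)" using xpos x4 by (intro sin_ge_zero) auto
      moreover have "sin (x/2) \<le> x/2" using xpos by (intro sin_x_le_x) simp
      moreover have "x/2 \<le> 1/2" using x4 pi_approx by simp
      ultimately show ?thesis by simp
    qed
    have "\<bar>sin (x/2)\<bar>^N \<le> (1/2)^N" by (rule power_mono) (use sb in auto)
    moreover have "K \<le> 2^N"
    proof -
      have "K \<le> 2 powr (real N)" unfolding K by (rule powr_mono) auto
      then show ?thesis by (simp add: powr_realpow)
    qed
    ultimately have "K * \<bar>sin (x/2)\<bar>^N \<le> 2^N * (1/2)^N"
      using Kpos by (intro mult_mono) auto
    also have "\<dots> = 1" by (simp add: power_mult_distrib[symmetric])
    finally show ?thesis using that[OF xpos x4] cz by simp
  qed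
  have sig2: "\<sigma> * \<sigma> = 1" using sg by auto
  have g1: "\<sigma> * f (pi/2 + x) \<le> 1"
  proof -
    obtain R where R: "f (pi/2 + x) = K * (\<sigma> * cos (x/2)^N * cos (real N * x/2) + R)" "\<bar>R\<bar> \<le> \<bar>sin (x/2)\<bar>^N"
      using h1 by blast
    have "\<sigma> * f (pi/2 + x) = K * (cos (x/2)^N * cos (real N * x/2) + \<sigma> * R)"
      using R(1) sg by (auto simp: algebra_simps)
    also have "\<dots> \<le> K * (cos (x/2)^N * cos (real N * x/2) + \<bar>sin (x/2)\<bar>^N)"
      using Kpos R(2) sg by (intro mult_left_mono) auto
    finally show ?thesis using B by simp
  qed
  have g2: "- \<sigma> * f (3*pi/2 + x) \<le> 1"
  proof -
    obtain R where R: "f (3*pi/2 + x) = K * (- \<sigma> * cos (x/2)^N * cos (real N * x/2) + R)" "\<bar>R\<bar> \<le> \<bar>sin (x/2)\<bar>^N"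
      using h2 by blast
    have "- \<sigma> * f (3*pi/2 + x) = K * (cos (x/2)^N * cos (real N * x/2) - \<sigma> * R)"
      using R(1) sg by (auto simp: algebra_simps)
    also have "\<dots> \<le> K * (cos (x/2)^N * cos (real N * x/2) + \<bar>sin (x/2)\<bar>^N)"
      using Kpos R(2) sg by (intro mult_left_mono) auto
    finally show ?thesis using B by simp
  qed
  have contab: "continuous_on {a..b} f" for a b by (rule continuous_on_subset[OF cont]) auto
  from sg show ?thesis
  proof
    assume s1: "\<sigma> = 1"
    obtain \<theta> where th: "pi/2 \<le> \<theta>" "\<theta> \<le> pi/2 + x" "f \<theta> = s"
      using IVT2'[where f=f and a="pi/2" and b="pi/2 + x" and y=s, OF _ _ _ contab] g1 f1 s1 s x by auto
    have "\<theta> \<noteq> pi/2"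
    proof
      assume e: "\<theta> = pi/2"
      have "f \<theta> = f (pi/2)" unfolding e ..
      then show False using th f1 s1 s by simp
    qed
    moreover have "\<theta> \<noteq> pi/2 + x"
    proof
      assume e: "\<theta> = pi/2 + x"
      have "f \<theta> = f (pi/2 + x)" unfolding e ..
      then show False using th g1 s1 s by simp
    qed
    ultimately have "\<theta> \<in> G_set" unfolding G_set_def using th x by auto
    then show ?thesis using th by auto
  next
    assume s1: "\<sigma> = -1"
    obtain \<theta> where th: "3*pi/2 \<le> \<theta>" "\<theta> \<le> 3*pi/2 + x" "f \<theta> = s"
      using IVT2'[where f=f and a="3*pi/2" and b="3*pi/2 + x" and y=s, OF _ _ _ contab] g2 f2 s1 s x by auto
    have "\<theta> \<noteq> 3*pi/2"
    proof
      assume e: "\<theta> = 3*pi/2"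
      have "f \<theta> = f (3*pi/2)" unfolding e ..
      then show False using th f2 s1 s by simp
    qed
    moreover have "\<theta> \<noteq> 3*pi/2 + x"
    proof
      assume e: "\<theta> = 3*pi/2 + x"
      have "f \<theta> = f (3*pi/2 + x)" unfolding e ..
      then show False using th g2 s1 s by simp
    qed
    ultimately have "\<theta> \<in> G_set" unfolding G_set_def using th x by auto
    then show ?thesis using th by auto
  qed
qed


lemma mk1:
  fixes X Y :: real
  assumes "F = K * (T + cos X ^ N * sin Y)" "T = \<sigma> * c^N * cs" "\<bar>cos X\<bar> = \<bar>sin (y/2)\<bar>"
  shows "\<exists>R. F = K * (\<sigma> * c^N * cs + R) \<and> \<bar>R\<bar> \<le> \<bar>sin (y/2)\<bar>^N"
  using assms bound_term[of "sin Y" "cos X" N] by (intro exI[of _ "cos X ^ N * sin Y"]) auto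

lemma mk2:
  fixes X Y :: real
  assumes "F = K * (cos X ^ N * sin Y + T)" "T = \<sigma> * c^N * cs" "\<bar>cos X\<bar> = \<bar>sin (y/2)\<bar>"
  shows "\<exists>R. F = K * (\<sigma> * c^N * cs + R) \<and> \<bar>R\<bar> \<le> \<bar>sin (y/2)\<bar>^N"
  using assms bound_term[of "sin Y" "cos X" N] by (intro exI[of _ "cos X ^ N * sin Y"]) auto

lemma sin_plus_cz: "cos (b::real) = 0 \<Longrightarrow> sin (z + b) = sin b * cos z"
  by (simp add: sin_add)
lemma sin_minus_cz: "cos (b::real) = 0 \<Longrightarrow> sin (z - b) = - (sin b * cos z)"
  by (simp add: sin_diff)

lemma M_h1:
  assumes a: "a = pi*(real N - 1)/4" and ca: "cos a = 0"
  shows "\<exists>R. M_val N (pi/2 + y) = 2 powr ((real N - 1)/2) * (sin a * cos (y/2)^N * cos (real N * y/2) + R) \<and> \<bar>R\<bar> \<le> \<bar>sin (y/2)\<bar>^N"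
proof (rule mk1[OF M_closed])
  have e1: "(pi/2 + y - pi/2)/2 = y/2" by simp
  have e2: "real N*(pi/2 + y - pi/2)/2 + pi*(real N - 1)/4 = real N * y/2 + a" using a by simp
  show "cos ((pi/2 + y - pi/2)/2)^N * sin (real N*(pi/2 + y - pi/2)/2 + pi*(real N - 1)/4) = sin a * cos (y/2)^N * cos (real N * y/2)"
    unfolding e1 e2 sin_plus_cz[OF ca] by simp
  have e3: "(pi/2 + y + pi/2)/2 = y/2 + pi/2" by simp
  show "\<bar>cos ((pi/2 + y + pi/2)/2)\<bar> = \<bar>sin (y/2)\<bar>" unfolding e3 by (simp add: cos_add)
qed

lemma M_h2:
  assumes a: "a = pi*(real N - 1)/4" and ca: "cos a = 0" and N: "odd N"
  shows "\<exists>R. M_val N (3*pi/2 + y) = 2 powr ((real N - 1)/2) * (- sin a * cos (y/2)^N * cos (real N * y/2) + R) \<and> \<bar>R\<bar> \<le> \<bar>sin (y/2)\<bar>^N"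
proof (rule mk2[OF M_closed])
  have e1: "(3*pi/2 + y + pi/2)/2 = y/2 + pi" by simp
  have e2: "real N*(3*pi/2 + y + pi/2)/2 + - (pi*(real N - 1)/4) = (real N * y/2 - a) + real N * pi" unfolding a by (simp add: field_simps)
  have "sin ((real N * y/2 - a) + real N * pi) = - sin (real N * y/2 - a)"
    using N by (simp add: sin_add)
  then show "cos ((3*pi/2 + y + pi/2)/2)^N * sin (real N*(3*pi/2 + y + pi/2)/2 + - (pi*(real N - 1)/4)) = - sin a * cos (y/2)^N * cos (real N * y/2)"
    unfolding e1 e2 using N by (simp add: cos_add sin_minus_cz[OF ca] power_minus_odd)
  have e3: "(3*pi/2 + y - pi/2)/2 = y/2 + pi/2" by simp
  show "\<bar>cos ((3*pi/2 + y - pi/2)/2)\<bar> = \<bar>sin (y/2)\<bar>" unfolding e3 by (simp add: cos_add)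
qed

lemma Mt_h1:
  assumes b: "b = real N * pi/2 + pi*(real N - 1)/4" and cb: "cos b = 0"
  shows "\<exists>R. Mtilde_val N (pi/2 + y) = 2 powr ((real N - 1)/2) * (sin b * cos (y/2)^N * cos (real N * y/2) + R) \<and> \<bar>R\<bar> \<le> \<bar>sin (y/2)\<bar>^N"
proof (rule mk1[OF Mt_closed])
  have e1: "((pi - (pi/2 + y)) - pi/2)/2 = - (y/2)" by simp
  have e2: "real N*((pi - (pi/2 + y)) - pi/2)/2 + (real N * (pi/2 + y) + pi*(real N - 1)/4) = real N * y/2 + b" using b by (simp add: algebra_simps)
  show "cos (((pi - (pi/2 + y)) - pi/2)/2)^N * sin (real N*((pi - (pi/2 + y)) - pi/2)/2 + (real N * (pi/2 + y) + pi*(real N - 1)/4)) = sin b * cos (y/2)^N * cos (real N * y/2)"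
    unfolding e1 e2 sin_plus_cz[OF cb] by simp
  have e3: "((pi - (pi/2 + y)) + pi/2)/2 = pi/2 - y/2" by simp
  show "\<bar>cos (((pi - (pi/2 + y)) + pi/2)/2)\<bar> = \<bar>sin (y/2)\<bar>" unfolding e3 by (simp add: cos_diff)
qed

lemma Mt_h2:
  assumes b: "b = real N * pi/2 + pi*(real N - 1)/4" and cb: "cos b = 0"
  shows "\<exists>R. Mtilde_val N (3*pi/2 + y) = 2 powr ((real N - 1)/2) * (- sin b * cos (y/2)^N * cos (real N * y/2) + R) \<and> \<bar>R\<bar> \<le> \<bar>sin (y/2)\<bar>^N"
proof (rule mk2[OF Mt_closed])
  have e1: "((pi - (3*pi/2 + y)) + pi/2)/2 = - (y/2)" by simp
  have e2: "real N*((pi - (3*pi/2 + y)) + pi/2)/2 + (real N * (3*pi/2 + y) - pi*(real N - 1)/4) = (real N * y/2 - b) + real (2*N) * pi" using b by (simp add: algebra_simps)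
  have "sin ((real N * y/2 - b) + real (2*N) * pi) = sin (real N * y/2 - b)"
    by (simp add: sin_add)
  then show "cos (((pi - (3*pi/2 + y)) + pi/2)/2)^N * sin (real N*((pi - (3*pi/2 + y)) + pi/2)/2 + (real N * (3*pi/2 + y) - pi*(real N - 1)/4)) = - sin b * cos (y/2)^N * cos (real N * y/2)"
    unfolding e1 e2 by (simp add: sin_minus_cz[OF cb])
  have e3: "((pi - (3*pi/2 + y)) - pi/2)/2 = - (y/2 + pi/2)" by simp
  show "\<bar>cos (((pi - (3*pi/2 + y)) - pi/2)/2)\<bar> = \<bar>sin (y/2)\<bar>" unfolding e3 cos_minus by (simp add: cos_add)
qed


lemma sig_pm: "cos (b::real) = 0 \<Longrightarrow> sin b = 1 \<or> sin b = -1"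
  using sin_cos_squared_add[of b] by (simp add: power2_eq_1_iff)

lemma cos_half_odd: "cos (real (2*q+1) * (pi/2)) = 0"
  unfolding cos_zero_iff_int by (intro exI[of _ "int (2*q+1)"]) simp

theorem proposition5:
  fixes N :: nat and s :: real
  assumes "odd N" and "N \<ge> 3"
    and "1 < s" and "s < 2 powr ((real N - 1) / 2)"
  shows "\<exists>\<theta>\<in>G_set. (N mod 4 = 3 \<longrightarrow> s = M_val N \<theta>)
                      \<and> (N mod 4 = 1 \<longrightarrow> s = Mtilde_val N \<theta>)"
proof -
  have c1: "continuous_on UNIV (M_val N)"
    unfolding M_val_def[abs_def] by (intro continuous_intros)
  have c2: "continuous_on UNIV (Mtilde_val N)"
    unfolding Mtilde_val_def[abs_def] by (intro continuous_intros)
  have "N mod 4 = 3 \<or> N mod 4 = 1" using assms(1) by presburger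
  then show ?thesis
  proof
    assume m: "N mod 4 = 3"
    define q where "q = N div 4"
    have Nq: "N = 4*q + 3" using m unfolding q_def by presburger
    define a where "a = pi*(real N - 1)/4"
    have "a = real (2*q+1) * (pi/2)" unfolding a_def Nq by (simp add: field_simps)
    then have ca: "cos a = 0" using cos_half_odd[of q] by (simp only:)
    obtain \<theta> where "\<theta> \<in> G_set" "s = M_val N \<theta>"
      using ivt_main[OF c1 sig_pm[OF ca] M_h1[OF a_def ca] M_h2[OF a_def ca assms(1)] assms(1,2) refl assms(3,4)]
      by blast
    then show ?thesis using m by auto
  next
    assume m: "N mod 4 = 1"
    define q where "q = N div 4"
    have Nq: "N = 4*q + 1" using m unfolding q_def by presburger
    define b where "b = real N * pi/2 + pi*(real N - 1)/4"
    have "b = real (2*(3*q)+1) * (pi/2)" unfolding b_def Nq by (simp add: field_simps)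
    then have cb: "cos b = 0" using cos_half_odd[of "3*q"] by (simp only:)
    obtain \<theta> where "\<theta> \<in> G_set" "s = Mtilde_val N \<theta>"
      using ivt_main[OF c2 sig_pm[OF cb] Mt_h1[OF b_def cb] Mt_h2[OF b_def cb] assms(1,2) refl assms(3,4)]
      by blast
    then show ?thesis using m by auto
  qed
qed

end
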